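(* Let $A$ be an algebra of Jordan type half over a field $\mathbb{F}$ of characteristic zero. If $a,b\in A$ are primitive axes of Jordan type half with $(a,b)=1$, then every non-zero idempotent of $J=\langle\langle a,b\rangle\rangle$ is a primitive axis of Jordan type half in $A$; that is, $J$ is solid.
   Context: All algebras are commutative, not necessarily associative; $A_\lambda(x)=\{u\in A:xu=\lambda u\}$. A primitive axis of Jordan type half is $x\neq0$ with $x^2=x$, $A=A_1(x)\oplus A_0(x)\oplus A_{1/2}(x)$, $A_1(x)=\mathbb{F}x$, and fusion rules $A_1A_1\subseteq A_1$, $A_1A_0=0$, $A_0A_0\subseteq A_0$, $A_1A_{1/2},A_0A_{1/2}\subseteq A_{1/2}$, $A_{1/2}A_{1/2}\subseteq A_1\oplus A_0$. An algebra of Jordan type half is a commutative algebra generated by such axes; it has a unique Frobenius form $(\cdot,\cdot)$ (bilinear, $(uv,w)=(u,vw)$, $(x,x)=1$ for primitive axes $x$). $J=\langle\langle a,b\rangle\rangle$ is solid if every idempotent $c\in J$ with $c\neq0$ and $c\neq1_J$ (the identity of $J$, if it exists; here $J$ has none) is a primitive axis of Jordan type half in $A$. *)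

theory Defs
  imports Main "HOL.Vector_Spaces"
begin

definition comm_algebra :: "('k::field \<Rightarrow> 'v::ab_group_add \<Rightarrow> 'v) \<Rightarrow> ('v \<Rightarrow> 'v \<Rightarrow> 'v) \<Rightarrow> bool" where
  "comm_algebra sc mu \<longleftrightarrow> vector_space sc
     \<and> (\<forall>u v. mu u v = mu v u)
     \<and> (\<forall>u v w. mu (u + v) w = mu u w + mu v w)
     \<and> (\<forall>t u v. mu (sc t u) v = sc t (mu u v))"

definition eigsp :: "('k::field \<Rightarrow> 'v::ab_group_add \<Rightarrow> 'v) \<Rightarrow> ('v \<Rightarrow> 'v \<Rightarrow> 'v) \<Rightarrow> 'v \<Rightarrow> 'k \<Rightarrow> 'v set" where
  "eigsp sc mu x l = {u. mu x u = sc l u}"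

inductive_set gen_subalg :: "('k::field \<Rightarrow> 'v::ab_group_add \<Rightarrow> 'v) \<Rightarrow> ('v \<Rightarrow> 'v \<Rightarrow> 'v) \<Rightarrow> 'v set \<Rightarrow> 'v set"
  for sc mu S where
  gen_base: "x \<in> S \<Longrightarrow> x \<in> gen_subalg sc mu S"
| gen_zero: "0 \<in> gen_subalg sc mu S"
| gen_add: "x \<in> gen_subalg sc mu S \<Longrightarrow> y \<in> gen_subalg sc mu S \<Longrightarrow> x + y \<in> gen_subalg sc mu S"
| gen_scale: "x \<in> gen_subalg sc mu S \<Longrightarrow> sc t x \<in> gen_subalg sc mu S"
| gen_mult: "x \<in> gen_subalg sc mu S \<Longrightarrow> y \<in> gen_subalg sc mu S \<Longrightarrow> mu x y \<in> gen_subalg sc mu S"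

definition primitive_axis :: "('k::field \<Rightarrow> 'v::ab_group_add \<Rightarrow> 'v) \<Rightarrow> ('v \<Rightarrow> 'v \<Rightarrow> 'v) \<Rightarrow> 'v \<Rightarrow> bool" where
  "primitive_axis sc mu x \<longleftrightarrow>
     (let A1 = eigsp sc mu x 1; A0 = eigsp sc mu x 0; Ah = eigsp sc mu x (1/2) in
       x \<noteq> 0 \<and> mu x x = x
     \<and> (\<forall>u. \<exists>u1 u0 uh. u1 \<in> A1 \<and> u0 \<in> A0 \<and> uh \<in> Ah \<and> u = u1 + u0 + uh)
     \<and> A1 = range (\<lambda>t. sc t x)
     \<and> (\<forall>u\<in>A1. \<forall>v\<in>A1. mu u v \<in> A1)
     \<and> (\<forall>u\<in>A1. \<forall>v\<in>A0. mu u v = 0)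
     \<and> (\<forall>u\<in>A0. \<forall>v\<in>A0. mu u v \<in> A0)
     \<and> (\<forall>u\<in>A1. \<forall>v\<in>Ah. mu u v \<in> Ah)
     \<and> (\<forall>u\<in>A0. \<forall>v\<in>Ah. mu u v \<in> Ah)
     \<and> (\<forall>u\<in>Ah. \<forall>v\<in>Ah. \<exists>w1 w0. w1 \<in> A1 \<and> w0 \<in> A0 \<and> mu u v = w1 + w0))"

definition jordan_half_algebra :: "('k::field \<Rightarrow> 'v::ab_group_add \<Rightarrow> 'v) \<Rightarrow> ('v \<Rightarrow> 'v \<Rightarrow> 'v) \<Rightarrow> bool" where
  "jordan_half_algebra sc mu \<longleftrightarrow> comm_algebra sc mu
     \<and> gen_subalg sc mu {x. primitive_axis sc mu x} = UNIV"

definition frobenius_form :: "('k::field \<Rightarrow> 'v::ab_group_add \<Rightarrow> 'v) \<Rightarrow> ('v \<Rightarrow> 'v \<Rightarrow> 'v) \<Rightarrow> ('v \<Rightarrow> 'v \<Rightarrow> 'k) \<Rightarrow> bool" where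
  "frobenius_form sc mu B \<longleftrightarrow>
       (\<forall>u v w. B (u + v) w = B u w + B v w)
     \<and> (\<forall>u v w. B u (v + w) = B u v + B u w)
     \<and> (\<forall>t u v. B (sc t u) v = t * B u v)
     \<and> (\<forall>t u v. B u (sc t v) = t * B u v)
     \<and> (\<forall>u v w. B (mu u v) w = B u (mu v w))
     \<and> (\<forall>x. primitive_axis sc mu x \<longrightarrow> B x x = 1)"

end

theory Submission
  imports Defs
begin

locale calg = vector_space sc for sc :: "'k::field_char_0 \<Rightarrow> 'v::ab_group_add \<Rightarrow> 'v" +
  fixes mu :: "'v \<Rightarrow> 'v \<Rightarrow> 'v"
  assumes mu_comm: "mu u v = mu v u"
    and mu_add1: "mu (u + v) w = mu u w + mu v w"
    and mu_scale1: "mu (sc t u) v = sc t (mu u v)"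
begin

lemma mu_add2: "mu w (u + v) = mu w u + mu w v"
  by (simp add: mu_comm[of w] mu_add1)
lemma mu_scale2: "mu v (sc t u) = sc t (mu v u)"
  by (simp add: mu_comm[of v] mu_scale1)
lemma mu_zero1[simp]: "mu 0 v = 0"
  using mu_add1[of 0 0 v] by (simp only: add_0_left add_cancel_right_right)
lemma mu_zero2[simp]: "mu v 0 = 0"
  using mu_add2[of v 0 0] by (simp only: add_0_left add_cancel_right_right)
lemma mu_minus1: "mu (- u) v = - mu u v"
proof -
  have "mu u v + mu (- u) v = 0" using mu_add1[of u "-u" v] by simp
  then show ?thesis by (simp add: eq_neg_iff_add_eq_0 add.commute)
qed
lemma mu_minus2: "mu v (- u) = - mu v u"
  by (simp add: mu_comm[of v] mu_minus1)
lemma mu_diff1: "mu (u - w) v = mu u v - mu w v"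
  by (simp only: diff_conv_add_uminus mu_add1 mu_minus1)
lemma mu_diff2: "mu v (u - w) = mu v u - mu v w"
  by (simp only: diff_conv_add_uminus mu_add2 mu_minus2)

lemmas mu_simps = mu_add1 mu_add2 mu_scale1 mu_scale2 mu_minus1 mu_minus2 mu_diff1 mu_diff2

definition ev :: "(nat \<times> 'v) list \<Rightarrow> 'k \<Rightarrow> 'v" where
  "ev L x = sum_list (map (\<lambda>(k,w). sc (x^k) w) L)"

definition polyv :: "('k \<Rightarrow> 'v) \<Rightarrow> bool" where
  "polyv f \<longleftrightarrow> (\<exists>L. \<forall>x. f x = ev L x)"

lemma ev_append: "ev (L1 @ L2) x = ev L1 x + ev L2 x"
  by (simp add: ev_def)

lemma polyv_const: "polyv (\<lambda>x. w)"
  unfolding polyv_def by (rule exI[of _ "[(0,w)]"]) (simp add: ev_def)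

lemma polyv_add: "polyv f \<Longrightarrow> polyv g \<Longrightarrow> polyv (\<lambda>x. f x + g x)"
  unfolding polyv_def by (metis ev_append)

lemma ev_scale: "ev (map (\<lambda>(k,w). (k, sc t w)) L) x = sc t (ev L x)"
  by (induction L) (auto simp: ev_def scale_right_distrib scale_left_commute)

lemma polyv_scale: "polyv f \<Longrightarrow> polyv (\<lambda>x. sc t (f x))"
  unfolding polyv_def by (metis ev_scale)

lemma polyv_neg: "polyv f \<Longrightarrow> polyv (\<lambda>x. - f x)"
  using polyv_scale[of f "-1"] by simp

lemma polyv_diff: "polyv f \<Longrightarrow> polyv g \<Longrightarrow> polyv (\<lambda>x. f x - g x)"
  using polyv_add[of f "\<lambda>x. - g x"] polyv_neg[of g] by simp

lemma ev_shift: "ev (map (\<lambda>(k,w). (Suc k, w)) L) x = sc x (ev L x)"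
  by (induction L) (auto simp: ev_def scale_right_distrib)

lemma polyv_x: "polyv f \<Longrightarrow> polyv (\<lambda>x. sc x (f x))"
  unfolding polyv_def by (metis ev_shift)

lemma mu_sum_list1: "mu (sum_list (map g L)) y = sum_list (map (\<lambda>z. mu (g z) y) L)"
  by (induction L) (auto simp: mu_add1)

lemma mu_sum_list2: "mu y (sum_list (map g L)) = sum_list (map (\<lambda>z. mu y (g z)) L)"
  by (induction L) (auto simp: mu_add2)

lemma ev_mu: "mu (ev L1 x) (ev L2 x) =
   ev (concat (map (\<lambda>(k1,w1). map (\<lambda>(k2,w2). (k1+k2, mu w1 w2)) L2) L1)) x"
proof (induction L1)
  case Nil
  then show ?case by (simp add: ev_def)
next
  case (Cons p L1)
  obtain k1 w1 where p: "p = (k1,w1)" by force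
  have "mu (sc (x^k1) w1) (ev L2 x) = ev (map (\<lambda>(k2,w2). (k1+k2, mu w1 w2)) L2) x"
    by (induction L2) (auto simp: ev_def mu_add2 mu_scale1 mu_scale2 power_add mult.commute)
  then show ?case using Cons by (simp add: p ev_def mu_add1)
qed

lemma polyv_mu: "polyv f \<Longrightarrow> polyv g \<Longrightarrow> polyv (\<lambda>x. mu (f x) (g x))"
  unfolding polyv_def by (metis ev_mu)

lemma ev_nil[simp]: "ev [] x = 0" by (simp add: ev_def)
lemma ev_cons[simp]: "ev ((k,w) # L) x = sc (x^k) w + ev L x" by (simp add: ev_def)

definition divL :: "'k \<Rightarrow> (nat \<times> 'v) list \<Rightarrow> (nat \<times> 'v) list" where
  "divL r L = concat (map (\<lambda>(k,w). map (\<lambda>i. (i, sc (r^(k - Suc i)) w)) [0..<k]) L)"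

lemma ev_upt: "ev (map (\<lambda>i. (i, g i)) [0..<k]) x = (\<Sum>i<k. sc (x^i) (g i))"
  by (induction k) (auto simp: ev_append)

lemma ev_concat_cons: "ev (concat (map F (p # L))) x = ev (F p) x + ev (concat (map F L)) x"
  by (simp add: ev_append)

lemma ev_diff_root: "ev L x - ev L r = sc (x - r) (ev (divL r L) x)"
proof (induction L)
  case Nil
  then show ?case by (simp add: divL_def)
next
  case (Cons p L)
  obtain k w where p: "p = (k,w)" by force
  have "sc (x^k) w - sc (r^k) w = sc (x - r) (\<Sum>i<k. sc (x^i) (sc (r^(k - Suc i)) w))"
  proof -
    have "sc (x^k) w - sc (r^k) w = sc (x^k - r^k) w" by (simp add: scale_left_diff_distrib)
    also have "\<dots> = sc ((x - r) * (\<Sum>i<k. r^(k - Suc i) * x^i)) w"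
      by (simp add: power_diff_sumr2)
    also have "\<dots> = sc (x - r) (\<Sum>i<k. sc (x^i) (sc (r^(k - Suc i)) w))"
      by (simp add: scale_sum_left scale_sum_right mult.commute sum_distrib_left)
    finally show ?thesis .
  qed
  note kw = this
  have e1: "ev (divL r ((k,w)#L)) x = (\<Sum>i<k. sc (x^i) (sc (r^(k - Suc i)) w)) + ev (divL r L) x"
    by (simp add: divL_def ev_append ev_upt)
  have "ev ((k,w)#L) x - ev ((k,w)#L) r = (sc (x^k) w - sc (r^k) w) + (ev L x - ev L r)"
    by (simp add: algebra_simps)
  also have "\<dots> = sc (x - r) (\<Sum>i<k. sc (x^i) (sc (r^(k - Suc i)) w)) + sc (x - r) (ev (divL r L) x)"
    using kw Cons by simp
  also have "\<dots> = sc (x - r) (ev (divL r ((k,w)#L)) x)"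
    by (simp only: e1 scale_right_distrib)
  finally show ?case by (simp add: p)
qed

lemma divL_deg: "\<forall>p\<in>set L. fst p \<le> Suc D \<Longrightarrow> \<forall>p\<in>set (divL r L). fst p \<le> D"
  by (auto simp: divL_def)

lemma ev_const0: "\<forall>p\<in>set L. fst p = 0 \<Longrightarrow> ev L x = ev L y"
  by (induction L) auto

lemma ev_zero_aux: "\<forall>p\<in>set L. fst p \<le> D \<Longrightarrow> \<forall>n::nat. n \<le> D \<longrightarrow> ev L (of_nat n) = 0 \<Longrightarrow> ev L x = 0"
proof (induction D arbitrary: L x)
  case 0
  then show ?case using ev_const0[of L x 0] by auto
next
  case (Suc D)
  define r :: 'k where "r = of_nat (Suc D)"
  have er: "ev L r = 0" using Suc.prems r_def by auto
  have "ev (divL r L) (of_nat n) = 0" if "n \<le> D" for n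
  proof -
    have "sc (of_nat n - r) (ev (divL r L) (of_nat n)) = 0"
      using ev_diff_root[of L "of_nat n" r] er Suc.prems that by simp
    moreover have "(of_nat n :: 'k) - r \<noteq> 0"
    proof -
      have "n \<noteq> Suc D" using that by simp
      then show ?thesis unfolding r_def by (metis of_nat_eq_iff right_minus_eq)
    qed
    ultimately show ?thesis by simp
  qed
  then have "ev (divL r L) x = 0" for x
    using Suc.IH[of "divL r L"] divL_deg[of L D r] Suc.prems by auto
  then show ?case using ev_diff_root[of L x r] er by simp
qed

lemma polyv_zero: "polyv f \<Longrightarrow> (\<And>n::nat. f (of_nat n) = 0) \<Longrightarrow> f x = 0"
proof -
  assume "polyv f" and z: "\<And>n::nat. f (of_nat n) = 0"
  then obtain L where L: "\<And>x. f x = ev L x" unfolding polyv_def by blast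
  have "\<forall>p\<in>set L. fst p \<le> sum_list (map fst L)"
  proof
    fix p assume "p \<in> set L"
    then have "fst p \<in> set (map fst L)" by simp
    then show "fst p \<le> sum_list (map fst L)" by (rule member_le_sum_list) auto
  qed
  then show ?thesis using ev_zero_aux[of L "sum_list (map fst L)" x] z L by auto
qed

definition lc4 :: "'v \<Rightarrow> 'v \<Rightarrow> 'v \<Rightarrow> 'v \<Rightarrow> 'k \<Rightarrow> 'k \<Rightarrow> 'k \<Rightarrow> 'k \<Rightarrow> 'v" where
  "lc4 x1 x2 x3 x4 p1 p2 p3 p4 = sc p1 x1 + sc p2 x2 + sc p3 x3 + sc p4 x4"

lemma lc4_add: "lc4 x1 x2 x3 x4 p1 p2 p3 p4 + lc4 x1 x2 x3 x4 q1 q2 q3 q4 = lc4 x1 x2 x3 x4 (p1+q1) (p2+q2) (p3+q3) (p4+q4)"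
  by (simp add: lc4_def scale_left_distrib algebra_simps)
lemma lc4_diff: "lc4 x1 x2 x3 x4 p1 p2 p3 p4 - lc4 x1 x2 x3 x4 q1 q2 q3 q4 = lc4 x1 x2 x3 x4 (p1-q1) (p2-q2) (p3-q3) (p4-q4)"
  by (simp add: lc4_def scale_left_diff_distrib algebra_simps)
lemma lc4_scale: "sc t (lc4 x1 x2 x3 x4 p1 p2 p3 p4) = lc4 x1 x2 x3 x4 (t*p1) (t*p2) (t*p3) (t*p4)"
  by (simp add: lc4_def scale_right_distrib)
lemma lc4_neg: "- (lc4 x1 x2 x3 x4 p1 p2 p3 p4) = lc4 x1 x2 x3 x4 (-p1) (-p2) (-p3) (-p4)"
  by (simp add: lc4_def algebra_simps)
lemma lc4_zero: "lc4 x1 x2 x3 x4 0 0 0 0 = 0"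
  by (simp add: lc4_def)
lemma lc4_mu1: "mu (lc4 x1 x2 x3 x4 p1 p2 p3 p4) y = lc4 (mu x1 y) (mu x2 y) (mu x3 y) (mu x4 y) p1 p2 p3 p4"
  by (simp add: lc4_def mu_add1 mu_scale1)
lemma lc4_mu2: "mu y (lc4 x1 x2 x3 x4 p1 p2 p3 p4) = lc4 (mu y x1) (mu y x2) (mu y x3) (mu y x4) p1 p2 p3 p4"
  by (simp add: lc4_def mu_add2 mu_scale2)

lemmas lc4_simps = lc4_add lc4_diff lc4_scale lc4_neg

definition P1 :: "'v \<Rightarrow> 'v \<Rightarrow> 'v" where "P1 c u = sc 2 (mu c (mu c u)) - mu c u"
definition P0 :: "'v \<Rightarrow> 'v \<Rightarrow> 'v" where "P0 c u = sc 2 (mu c (mu c u)) - sc 3 (mu c u) + u"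
definition Ph :: "'v \<Rightarrow> 'v \<Rightarrow> 'v" where "Ph c u = sc 4 (mu c u) - sc 4 (mu c (mu c u))"

lemma eig_lc: assumes "mu c x = x" "mu c y = 0" "mu c w = sc (1/2) w"
  shows "mu c (lc4 x y w 0 p1 p2 p3 p4) = lc4 x y w 0 p1 0 (p3/2) 0"
  using assms by (simp add: lc4_def mu_simps)

lemma eig_proj: assumes "mu c x = x" "mu c y = 0" "mu c w = sc (1/2) w"
  shows "P1 c (lc4 x y w 0 p1 p2 p3 p4) = lc4 x y w 0 p1 0 0 0"
    and "P0 c (lc4 x y w 0 p1 p2 p3 p4) = lc4 x y w 0 0 p2 0 p4"
    and "Ph c (lc4 x y w 0 p1 p2 p3 p4) = lc4 x y w 0 0 0 p3 0"
  using assms by (simp_all add: P1_def P0_def Ph_def eig_lc lc4_simps)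

lemma lc4_triv: "lc4 x y w v 1 1 1 0 = x + y + w" "lc4 x y w v 1 0 0 0 = x"
   "lc4 x y w v 0 1 0 0 = y" "lc4 x y w v 0 0 1 0 = w" "lc4 x y w 0 p1 p2 p3 p4 = lc4 x y w 0 p1 p2 p3 0"
  by (simp_all add: lc4_def)

lemma decomp_proj:
  assumes "mu c x = x" "mu c y = 0" "mu c w = sc (1/2) w" "u = x + y + w"
  shows "P1 c u = x" "P0 c u = y" "Ph c u = w"
proof -
  have u: "u = lc4 x y w 0 1 1 1 0" using assms lc4_triv by simp
  show "P1 c u = x" "P0 c u = y" "Ph c u = w"
    by (simp only: u eig_proj[OF assms(1-3)]; simp add: lc4_def)+
qed

lemma axis_D: assumes "primitive_axis sc mu c"
  shows "c \<noteq> 0" "mu c c = c"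
    "\<exists>u1 u0 uh. mu c u1 = u1 \<and> mu c u0 = 0 \<and> mu c uh = sc (1/2) uh \<and> u = u1 + u0 + uh"
    "mu c u = u \<Longrightarrow> \<exists>t. u = sc t c"
    "mu c u = 0 \<Longrightarrow> mu c v = 0 \<Longrightarrow> mu c (mu u v) = 0"
    "mu c u = 0 \<Longrightarrow> mu c v = sc (1/2) v \<Longrightarrow> mu c (mu u v) = sc (1/2) (mu u v)"
    "mu c u = sc (1/2) u \<Longrightarrow> mu c v = sc (1/2) v \<Longrightarrow> \<exists>w1 w0. mu c w1 = w1 \<and> mu c w0 = 0 \<and> mu u v = w1 + w0"
proof -
  note d = assms[unfolded primitive_axis_def Let_def eigsp_def]
  show "c \<noteq> 0" "mu c c = c" using d by simp_all
  show "\<exists>u1 u0 uh. mu c u1 = u1 \<and> mu c u0 = 0 \<and> mu c uh = sc (1/2) uh \<and> u = u1 + u0 + uh"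
  proof -
    from d have "\<exists>u1 u0 uh. u1 \<in> {u. mu c u = sc 1 u} \<and> u0 \<in> {u. mu c u = sc 0 u} \<and> uh \<in> {u. mu c u = sc (1/2) u} \<and> u = u1 + u0 + uh"
      by blast
    then show ?thesis by simp
  qed
  show "mu c u = u \<Longrightarrow> \<exists>t. u = sc t c"
  proof -
    assume "mu c u = u"
    then have "u \<in> {u. mu c u = sc 1 u}" by simp
    then have "u \<in> range (\<lambda>t. sc t c)" using d by blast
    then show ?thesis by blast
  qed
  show "mu c u = 0 \<Longrightarrow> mu c v = 0 \<Longrightarrow> mu c (mu u v) = 0"
  proof -
    assume "mu c u = 0" "mu c v = 0"
    then have "u \<in> {u. mu c u = sc 0 u}" "v \<in> {u. mu c u = sc 0 u}" by simp_all
    then have "mu u v \<in> {u. mu c u = sc 0 u}" using d by blast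
    then show ?thesis by simp
  qed
  show "mu c u = 0 \<Longrightarrow> mu c v = sc (1/2) v \<Longrightarrow> mu c (mu u v) = sc (1/2) (mu u v)"
  proof -
    assume "mu c u = 0" "mu c v = sc (1/2) v"
    then have "u \<in> {u. mu c u = sc 0 u}" "v \<in> {u. mu c u = sc (1/2) u}" by simp_all
    then have "mu u v \<in> {u. mu c u = sc (1/2) u}" using d by blast
    then show ?thesis by simp
  qed
  show "mu c u = sc (1/2) u \<Longrightarrow> mu c v = sc (1/2) v \<Longrightarrow> \<exists>w1 w0. mu c w1 = w1 \<and> mu c w0 = 0 \<and> mu u v = w1 + w0"
  proof -
    assume "mu c u = sc (1/2) u" "mu c v = sc (1/2) v"
    then have "u \<in> {u. mu c u = sc (1/2) u}" "v \<in> {u. mu c u = sc (1/2) u}" by simp_all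
    then have "\<exists>w1 w0. w1 \<in> {u. mu c u = sc 1 u} \<and> w0 \<in> {u. mu c u = sc 0 u} \<and> mu u v = w1 + w0"
      using d by blast
    then show ?thesis by simp
  qed
qed

lemma axis_I:
  assumes "c \<noteq> 0" "mu c c = c"
    "\<And>u. \<exists>u1 u0 uh. mu c u1 = u1 \<and> mu c u0 = 0 \<and> mu c uh = sc (1/2) uh \<and> u = u1 + u0 + uh"
    "\<And>u. mu c u = u \<Longrightarrow> \<exists>t. u = sc t c"
    "\<And>u v. mu c u = 0 \<Longrightarrow> mu c v = 0 \<Longrightarrow> mu c (mu u v) = 0"
    "\<And>u v. mu c u = 0 \<Longrightarrow> mu c v = sc (1/2) v \<Longrightarrow> mu c (mu u v) = sc (1/2) (mu u v)"
    "\<And>u v. mu c u = sc (1/2) u \<Longrightarrow> mu c v = sc (1/2) v \<Longrightarrow> \<exists>w1 w0. mu c w1 = w1 \<and> mu c w0 = 0 \<and> mu u v = w1 + w0"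
  shows "primitive_axis sc mu c"
proof -
  have r: "{u. mu c u = u} = range (\<lambda>t. sc t c)"
  proof
    show "{u. mu c u = u} \<subseteq> range (\<lambda>t. sc t c)" using assms(4) by blast
    show "range (\<lambda>t. sc t c) \<subseteq> {u. mu c u = u}" using assms(2) by (auto simp: mu_scale2)
  qed
  show ?thesis
    unfolding primitive_axis_def Let_def eigsp_def
  proof (intro conjI)
    show "{u. mu c u = sc 1 u} = range (\<lambda>t. sc t c)" using r by simp
    show "\<forall>u\<in>{u. mu c u = sc 1 u}. \<forall>v\<in>{u. mu c u = sc 1 u}. mu u v \<in> {u. mu c u = sc 1 u}"
      using r by (auto simp: mu_scale1 mu_scale2 assms(2))
    show "\<forall>u\<in>{u. mu c u = sc 1 u}. \<forall>v\<in>{u. mu c u = sc 0 u}. mu u v = 0"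
      using r by (auto simp: mu_scale1)
    show "\<forall>u\<in>{u. mu c u = sc 0 u}. \<forall>v\<in>{u. mu c u = sc 0 u}. mu u v \<in> {u. mu c u = sc 0 u}"
      using assms(5) by auto
    show "\<forall>u\<in>{u. mu c u = sc 1 u}. \<forall>v\<in>{u. mu c u = sc (1/2) u}. mu u v \<in> {u. mu c u = sc (1/2) u}"
      using r by (auto simp: mu_scale1 mu_scale2 mult.commute)
    show "\<forall>u\<in>{u. mu c u = sc 0 u}. \<forall>v\<in>{u. mu c u = sc (1/2) u}. mu u v \<in> {u. mu c u = sc (1/2) u}"
      using assms(6) by auto
    show "\<forall>u\<in>{u. mu c u = sc (1/2) u}. \<forall>v\<in>{u. mu c u = sc (1/2) u}. \<exists>w1 w0. w1 \<in> {u. mu c u = sc 1 u} \<and> w0 \<in> {u. mu c u = sc 0 u} \<and> mu u v = w1 + w0"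
      using assms(7) by auto
    show "\<forall>u. \<exists>u1 u0 uh. u1 \<in> {u. mu c u = sc 1 u} \<and> u0 \<in> {u. mu c u = sc 0 u} \<and> uh \<in> {u. mu c u = sc (1/2) u} \<and> u = u1 + u0 + uh"
      using assms(3) by auto
  qed (use assms in auto)
qed

definition axid :: "('v \<Rightarrow> 'v \<Rightarrow> 'k) \<Rightarrow> 'v \<Rightarrow> bool" where
  "axid B c \<longleftrightarrow> (\<forall>u v.
     sc 2 (mu c (mu c (mu c u))) - sc 3 (mu c (mu c u)) + mu c u = 0
   \<and> P1 c u - sc (B c u) c = 0
   \<and> mu c (mu (P0 c u) (P0 c v)) = 0
   \<and> mu c (mu (P0 c u) (Ph c v)) - sc (1/2) (mu (P0 c u) (Ph c v)) = 0
   \<and> Ph c (mu (Ph c u) (Ph c v)) = 0)"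

lemma axis_to_id:
  assumes ax: "primitive_axis sc mu c" and fb: "frobenius_form sc mu B"
  shows "axid B c"
  unfolding axid_def
proof (intro allI conjI)
  fix u v
  obtain u1 u0 uh where U: "mu c u1 = u1" "mu c u0 = 0" "mu c uh = sc (1/2) uh" "u = u1 + u0 + uh"
    using axis_D(3)[OF ax] by blast
  obtain v1 v0 vh where V: "mu c v1 = v1" "mu c v0 = 0" "mu c vh = sc (1/2) vh" "v = v1 + v0 + vh"
    using axis_D(3)[OF ax] by blast
  have cc: "mu c c = c" using axis_D(2)[OF ax] .
  have u: "u = lc4 u1 u0 uh 0 1 1 1 0" using U(4) by (simp add: lc4_def)
  show "sc 2 (mu c (mu c (mu c u))) - sc 3 (mu c (mu c u)) + mu c u = 0"
    unfolding u by (simp add: eig_lc[OF U(1-3)] lc4_simps lc4_zero)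
  have p: "P1 c u = u1" "P0 c u = u0" "Ph c u = uh" using decomp_proj[OF U] by simp_all
  have q: "P1 c v = v1" "P0 c v = v0" "Ph c v = vh" using decomp_proj[OF V] by simp_all
  obtain t where t: "u1 = sc t c" using axis_D(4)[OF ax U(1)] by blast
  have B2add: "B x (y + w) = B x y + B x w" for x y w using fb unfolding frobenius_form_def by blast
  have B2sc: "B x (sc s y) = s * B x y" for x y s using fb unfolding frobenius_form_def by blast
  have Bas: "B (mu x y) w = B x (mu y w)" for x y w using fb unfolding frobenius_form_def by blast
  have Bcc: "B c c = 1" using fb ax unfolding frobenius_form_def by blast
  have B0: "B x 0 = 0" for x using B2add[of x 0 0] by simp
  have Bu0: "B c u0 = 0" using Bas[of c c u0] cc U(2) B0 by simp
  have "B c uh = B c (mu c uh)" using Bas[of c c uh] cc by simp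
  also have "\<dots> = (1/2) * B c uh" using U(3) B2sc by simp
  finally have Buh: "B c uh = 0" by simp
  have "B c u = t" using U(4) t B2add B2sc Bcc Bu0 Buh by simp
  then show "P1 c u - sc (B c u) c = 0" using p t by simp
  show "mu c (mu (P0 c u) (P0 c v)) = 0" using p q axis_D(5)[OF ax U(2) V(2)] by simp
  show "mu c (mu (P0 c u) (Ph c v)) - sc (1/2) (mu (P0 c u) (Ph c v)) = 0"
    using p q axis_D(6)[OF ax U(2) V(3)] by simp
  obtain w1 w0 where W: "mu c w1 = w1" "mu c w0 = 0" "mu uh vh = w1 + w0"
    using axis_D(7)[OF ax U(3) V(3)] by blast
  have "Ph c (w1 + w0 + 0) = 0" by (rule decomp_proj(3)) (use W in simp_all)
  then show "Ph c (mu (Ph c u) (Ph c v)) = 0" using p q W by simp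
qed

lemma sc2: "sc 2 u = u + u"
  using scale_left_distrib[of 1 1 u] by (simp add: one_add_one)

lemma id_to_axis:
  assumes c0: "c \<noteq> 0" and cc: "mu c c = c" and ai: "axid B c"
  shows "primitive_axis sc mu c"
proof (rule axis_I[OF c0 cc])
  have I: "sc 2 (mu c (mu c (mu c u))) - sc 3 (mu c (mu c u)) + mu c u = 0"
       "P1 c u - sc (B c u) c = 0"
       "mu c (mu (P0 c u) (P0 c v)) = 0"
       "mu c (mu (P0 c u) (Ph c v)) - sc (1/2) (mu (P0 c u) (Ph c v)) = 0"
       "Ph c (mu (Ph c u) (Ph c v)) = 0" for u v
    using ai unfolding axid_def by blast+
  have dec: "mu c (P1 c u) = P1 c u \<and> mu c (P0 c u) = 0 \<and> mu c (Ph c u) = sc (1/2) (Ph c u)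
      \<and> u = P1 c u + P0 c u + Ph c u" for u
  proof -
    define X1 where "X1 = mu c u"
    define X2 where "X2 = mu c X1"
    define X3 where "X3 = mu c X2"
    have i0: "lc4 X3 X2 X1 u 2 (-3) 1 0 = 0" using I(1)[of u] by (simp add: lc4_def X1_def X2_def X3_def)
    have p1: "P1 c u = lc4 X3 X2 X1 u 0 2 (-1) 0" by (simp add: P1_def lc4_def X1_def X2_def)
    have p0: "P0 c u = lc4 X3 X2 X1 u 0 2 (-3) 1" by (simp add: P0_def lc4_def X1_def X2_def)
    have ph: "Ph c u = lc4 X3 X2 X1 u 0 (-4) 4 0" by (simp add: Ph_def lc4_def X1_def X2_def)
    have lp1: "mu c (P1 c u) = lc4 X3 X2 X1 u 2 (-1) 0 0" by (simp add: P1_def lc4_def X1_def X2_def X3_def mu_simps)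
    have lp0: "mu c (P0 c u) = lc4 X3 X2 X1 u 2 (-3) 1 0" by (simp add: P0_def lc4_def X1_def X2_def X3_def mu_simps)
    have lph: "mu c (Ph c u) = lc4 X3 X2 X1 u (-4) 4 0 0" by (simp add: Ph_def lc4_def X1_def X2_def X3_def mu_simps)
    have "mu c (P1 c u) - P1 c u = lc4 X3 X2 X1 u 2 (-3) 1 0" unfolding lp1 unfolding p1 by (simp add: lc4_simps)
    then have 1: "mu c (P1 c u) = P1 c u" using i0 by simp
    have 2: "mu c (P0 c u) = 0" using lp0 i0 by simp
    have "mu c (Ph c u) - sc (1/2) (Ph c u) = sc (-2) (lc4 X3 X2 X1 u 2 (-3) 1 0)"
      unfolding lph unfolding ph by (simp add: lc4_simps)
    then have 3: "mu c (Ph c u) = sc (1/2) (Ph c u)" using i0 by simp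
    have "P1 c u + P0 c u + Ph c u = lc4 X3 X2 X1 u 0 0 0 1" unfolding p1 p0 ph by (simp add: lc4_simps)
    then have 4: "u = P1 c u + P0 c u + Ph c u" by (simp add: lc4_def)
    show ?thesis using 1 2 3 4 by blast
  qed
  show "\<exists>u1 u0 uh. mu c u1 = u1 \<and> mu c u0 = 0 \<and> mu c uh = sc (1/2) uh \<and> u = u1 + u0 + uh" for u
    using dec[of u] by blast
  show "\<exists>t. u = sc t c" if "mu c u = u" for u
  proof -
    have "P1 c u = u" unfolding P1_def using that by (simp add: sc2)
    then show ?thesis using I(2)[of u] by (metis right_minus_eq)
  qed
  have e0: "P0 c u = u" if "mu c u = 0" for u using decomp_proj(2)[of c 0 u 0 u] that by simp
  have eh: "Ph c u = u" if "mu c u = sc (1/2) u" for u using decomp_proj(3)[of c 0 0 u u] that by simp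
  show "mu c (mu u v) = 0" if "mu c u = 0" "mu c v = 0" for u v
    using I(3)[of u v] e0 that by simp
  show "mu c (mu u v) = sc (1/2) (mu u v)" if "mu c u = 0" "mu c v = sc (1/2) v" for u v
    using I(4)[of u v] e0 eh that by simp
  show "\<exists>w1 w0. mu c w1 = w1 \<and> mu c w0 = 0 \<and> mu u v = w1 + w0" if "mu c u = sc (1/2) u" "mu c v = sc (1/2) v" for u v
  proof -
    have "Ph c (mu u v) = 0" using I(5)[of u v] eh that by simp
    then show ?thesis using dec[of "mu u v"] by auto
  qed
qed

definition tau :: "'v \<Rightarrow> 'v \<Rightarrow> 'v" where "tau p u = u - sc 2 (Ph p u)"

lemma Ph_add: "Ph p (u + v) = Ph p u + Ph p v"
  by (simp add: Ph_def mu_simps scale_right_distrib algebra_simps)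
lemma Ph_sc: "Ph p (sc t u) = sc t (Ph p u)"
  by (simp add: Ph_def mu_simps scale_right_diff_distrib mult.commute)
lemma tau_add: "tau p (u + v) = tau p u + tau p v"
  by (simp add: tau_def Ph_add scale_right_distrib algebra_simps)
lemma tau_sc: "tau p (sc t u) = sc t (tau p u)"
  by (simp add: tau_def Ph_sc scale_right_diff_distrib scale_left_commute)

lemma tau_dec: assumes "mu c x = x" "mu c y = 0" "mu c w = sc (1/2) w"
  shows "tau c (x + y + w) = x + y - w"
  using decomp_proj(3)[OF assms refl] by (simp add: tau_def sc2 algebra_simps)

lemma tau_invol: assumes ax: "primitive_axis sc mu c" shows "tau c (tau c u) = u"
proof -
  obtain u1 u0 uh where U: "mu c u1 = u1" "mu c u0 = 0" "mu c uh = sc (1/2) uh" "u = u1 + u0 + uh"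
    using axis_D(3)[OF ax] by blast
  have "tau c u = u1 + u0 + (- uh)" using tau_dec[OF U(1-3)] U(4) by simp
  moreover have "tau c (u1 + u0 + (- uh)) = u1 + u0 + uh"
    using tau_dec[OF U(1,2), of "- uh"] U(3) by (simp add: mu_minus2)
  ultimately show ?thesis using U(4) by simp
qed

lemma tau_mu: assumes ax: "primitive_axis sc mu c" shows "tau c (mu u v) = mu (tau c u) (tau c v)"
proof -
  have cc: "mu c c = c" using axis_D(2)[OF ax] .
  obtain u1 u0 uh where U: "mu c u1 = u1" "mu c u0 = 0" "mu c uh = sc (1/2) uh" "u = u1 + u0 + uh"
    using axis_D(3)[OF ax] by blast
  obtain v1 v0 vh where V: "mu c v1 = v1" "mu c v0 = 0" "mu c vh = sc (1/2) vh" "v = v1 + v0 + vh"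
    using axis_D(3)[OF ax] by blast
  obtain t where t: "u1 = sc t c" using axis_D(4)[OF ax U(1)] by blast
  obtain s where s: "v1 = sc s c" using axis_D(4)[OF ax V(1)] by blast
  obtain w1 w0 where W: "mu c w1 = w1" "mu c w0 = 0" "mu uh vh = w1 + w0"
    using axis_D(7)[OF ax U(3) V(3)] by blast
  have z1: "mu u1 v0 = 0" using t V(2) by (simp add: mu_scale1)
  have z2: "mu u0 v1 = 0" using s U(2) by (simp add: mu_scale2 mu_comm[of u0 c])
  define W1 where "W1 = mu u1 v1 + w1"
  define W0 where "W0 = mu u0 v0 + w0"
  define Wh where "Wh = mu u1 vh + mu u0 vh + mu uh v1 + mu uh v0"
  have e1: "mu c W1 = W1" unfolding W1_def using t s W(1) cc by (simp add: mu_simps)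
  have e0: "mu c W0 = 0" unfolding W0_def using W(2) axis_D(5)[OF ax U(2) V(2)] by (simp add: mu_simps)
  have h1: "mu c (mu u1 vh) = sc (1/2) (mu u1 vh)" using t V(3) by (simp add: mu_simps scale_left_commute)
  have h2: "mu c (mu u0 vh) = sc (1/2) (mu u0 vh)" using axis_D(6)[OF ax U(2) V(3)] .
  have h3: "mu c (mu uh v1) = sc (1/2) (mu uh v1)" using s U(3) by (simp add: mu_simps scale_left_commute mu_comm[of uh c])
  have h4: "mu c (mu uh v0) = sc (1/2) (mu uh v0)" using axis_D(6)[OF ax V(2) U(3)] by (simp add: mu_comm[of v0])
  have eh: "mu c Wh = sc (1/2) Wh" unfolding Wh_def using h1 h2 h3 h4 by (simp add: mu_simps scale_right_distrib)
  have m: "mu u v = W1 + W0 + Wh" unfolding W1_def W0_def Wh_def U(4) V(4)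
    using z1 z2 W(3) by (simp add: mu_simps algebra_simps)
  have tm: "tau c (mu u v) = W1 + W0 - Wh" unfolding m by (rule tau_dec[OF e1 e0 eh])
  have tu: "tau c u = u1 + u0 - uh" using tau_dec[OF U(1-3)] U(4) by simp
  have tv: "tau c v = v1 + v0 - vh" using tau_dec[OF V(1-3)] V(4) by simp
  have "mu (u1 + u0 - uh) (v1 + v0 - vh) = W1 + W0 - Wh" unfolding W1_def W0_def Wh_def
    using z1 z2 W(3) by (simp add: mu_simps algebra_simps)
  then show ?thesis by (simp only: tm tu tv)
qed

lemma auto_axis:
  assumes inv: "\<And>u. f (f u) = u" and fadd: "\<And>u v. f (u + v) = f u + f v"
    and fsc: "\<And>t u. f (sc t u) = sc t (f u)" and fmu: "\<And>u v. f (mu u v) = mu (f u) (f v)"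
    and ax: "primitive_axis sc mu q"
  shows "primitive_axis sc mu (f q)"
proof -
  have f0: "f 0 = 0" using fadd[of 0 0] by (simp only: add_0_left add_cancel_right_right)
  have E: "mu (f q) x = sc l x \<longleftrightarrow> mu q (f x) = sc l (f x)" for x l
  proof
    have a: "f (mu (f q) x) = mu q (f x)" by (simp add: fmu inv)
    assume "mu (f q) x = sc l x"
    then have "f (mu (f q) x) = f (sc l x)" by simp
    then show "mu q (f x) = sc l (f x)" using a fsc by simp
  next
    have b: "f (mu q (f x)) = mu (f q) x" by (simp add: fmu inv)
    assume "mu q (f x) = sc l (f x)"
    then have "f (mu q (f x)) = f (sc l (f x))" by simp
    then show "mu (f q) x = sc l x" using b fsc inv by simp
  qed
  have E1: "mu (f q) x = x \<longleftrightarrow> mu q (f x) = f x" for x using E[of x 1] by simp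
  have E0: "mu (f q) x = 0 \<longleftrightarrow> mu q (f x) = 0" for x using E[of x 0] by simp
  show ?thesis
  proof (rule axis_I)
    show "f q \<noteq> 0"
    proof
      assume "f q = 0"
      then have "f (f q) = f 0" by simp
      then have "q = 0" using inv f0 by simp
      then show False using axis_D(1)[OF ax] by simp
    qed
    have "mu (f q) (f q) = f (mu q q)" by (simp add: fmu)
    then show "mu (f q) (f q) = f q" using axis_D(2)[OF ax] by simp
    show "\<exists>u1 u0 uh. mu (f q) u1 = u1 \<and> mu (f q) u0 = 0 \<and> mu (f q) uh = sc (1/2) uh \<and> u = u1 + u0 + uh" for u
    proof -
      obtain u1 u0 uh where U: "mu q u1 = u1" "mu q u0 = 0" "mu q uh = sc (1/2) uh" "f u = u1 + u0 + uh"
        using axis_D(3)[OF ax] by blast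
      have "f (f u) = f (u1 + u0 + uh)" using U(4) by simp
      then have "u = f u1 + f u0 + f uh" using inv fadd by simp
      moreover have "mu (f q) (f u1) = f u1" using E1 U(1) inv by simp
      moreover have "mu (f q) (f u0) = 0" using E0 U(2) inv by simp
      moreover have "mu (f q) (f uh) = sc (1/2) (f uh)" using E U(3) inv by simp
      ultimately show ?thesis by blast
    qed
    show "\<exists>t. u = sc t (f q)" if "mu (f q) u = u" for u
    proof -
      have "mu q (f u) = f u" using that E1 by simp
      then obtain t where "f u = sc t q" using axis_D(4)[OF ax] by blast
      then have "f (f u) = f (sc t q)" by simp
      then have "u = sc t (f q)" using inv fsc by simp
      then show ?thesis by blast
    qed
    show "mu (f q) (mu u v) = 0" if "mu (f q) u = 0" "mu (f q) v = 0" for u v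
    proof -
      have "mu q (f u) = 0" "mu q (f v) = 0" using that E0 by simp_all
      then have "mu q (mu (f u) (f v)) = 0" using axis_D(5)[OF ax] by blast
      then show ?thesis using E0 fmu by simp
    qed
    show "mu (f q) (mu u v) = sc (1/2) (mu u v)" if "mu (f q) u = 0" "mu (f q) v = sc (1/2) v" for u v
    proof -
      have "mu q (f u) = 0" "mu q (f v) = sc (1/2) (f v)" using that E0 E by simp_all
      then have "mu q (mu (f u) (f v)) = sc (1/2) (mu (f u) (f v))" using axis_D(6)[OF ax] by blast
      then show ?thesis using E fmu by simp
    qed
    show "\<exists>w1 w0. mu (f q) w1 = w1 \<and> mu (f q) w0 = 0 \<and> mu u v = w1 + w0"
      if "mu (f q) u = sc (1/2) u" "mu (f q) v = sc (1/2) v" for u v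
    proof -
      have "mu q (f u) = sc (1/2) (f u)" "mu q (f v) = sc (1/2) (f v)" using that E by simp_all
      then obtain w1 w0 where W: "mu q w1 = w1" "mu q w0 = 0" "mu (f u) (f v) = w1 + w0"
        using axis_D(7)[OF ax] by blast
      have "f (mu (f u) (f v)) = f (w1 + w0)" using W(3) by simp
      then have "mu u v = f w1 + f w0" using fmu fadd inv by simp
      moreover have "mu (f q) (f w1) = f w1" using E1 W(1) inv by simp
      moreover have "mu (f q) (f w0) = 0" using E0 W(2) inv by simp
      ultimately show ?thesis by blast
    qed
  qed
qed

lemma tau_axis: assumes "primitive_axis sc mu p" "primitive_axis sc mu q"
  shows "primitive_axis sc mu (tau p q)"
  by (rule auto_axis[OF tau_invol[OF assms(1)] tau_add tau_sc tau_mu[OF assms(1)] assms(2)])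

definition lc6 :: "'v \<Rightarrow> 'v \<Rightarrow> 'v \<Rightarrow> 'v \<Rightarrow> 'v \<Rightarrow> 'v \<Rightarrow> 'k \<Rightarrow> 'k \<Rightarrow> 'k \<Rightarrow> 'k \<Rightarrow> 'k \<Rightarrow> 'k \<Rightarrow> 'v" where
  "lc6 x1 x2 x3 x4 x5 x6 p1 p2 p3 p4 p5 p6 = sc p1 x1 + sc p2 x2 + sc p3 x3 + sc p4 x4 + sc p5 x5 + sc p6 x6"

lemma lc6_add: "lc6 x1 x2 x3 x4 x5 x6 p1 p2 p3 p4 p5 p6 + lc6 x1 x2 x3 x4 x5 x6 q1 q2 q3 q4 q5 q6
   = lc6 x1 x2 x3 x4 x5 x6 (p1+q1) (p2+q2) (p3+q3) (p4+q4) (p5+q5) (p6+q6)"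
  by (simp add: lc6_def scale_left_distrib algebra_simps)
lemma lc6_diff: "lc6 x1 x2 x3 x4 x5 x6 p1 p2 p3 p4 p5 p6 - lc6 x1 x2 x3 x4 x5 x6 q1 q2 q3 q4 q5 q6
   = lc6 x1 x2 x3 x4 x5 x6 (p1-q1) (p2-q2) (p3-q3) (p4-q4) (p5-q5) (p6-q6)"
  by (simp add: lc6_def scale_left_diff_distrib algebra_simps)
lemma lc6_scale: "sc t (lc6 x1 x2 x3 x4 x5 x6 p1 p2 p3 p4 p5 p6) = lc6 x1 x2 x3 x4 x5 x6 (t*p1) (t*p2) (t*p3) (t*p4) (t*p5) (t*p6)"
  by (simp add: lc6_def scale_right_distrib)
lemma lc6_neg: "- (lc6 x1 x2 x3 x4 x5 x6 p1 p2 p3 p4 p5 p6) = lc6 x1 x2 x3 x4 x5 x6 (-p1) (-p2) (-p3) (-p4) (-p5) (-p6)"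
  by (simp add: lc6_def algebra_simps)
lemma lc6_zero: "0 = lc6 x1 x2 x3 x4 x5 x6 0 0 0 0 0 0"
  by (simp add: lc6_def)
lemma lc6_basis:
  "x1 = lc6 x1 x2 x3 x4 x5 x6 1 0 0 0 0 0" "x2 = lc6 x1 x2 x3 x4 x5 x6 0 1 0 0 0 0"
  "x3 = lc6 x1 x2 x3 x4 x5 x6 0 0 1 0 0 0" "x4 = lc6 x1 x2 x3 x4 x5 x6 0 0 0 1 0 0"
  "x5 = lc6 x1 x2 x3 x4 x5 x6 0 0 0 0 1 0" "x6 = lc6 x1 x2 x3 x4 x5 x6 0 0 0 0 0 1"
  by (simp_all add: lc6_def)
lemma lc6_eqI: "p1 = q1 \<Longrightarrow> p2 = q2 \<Longrightarrow> p3 = q3 \<Longrightarrow> p4 = q4 \<Longrightarrow> p5 = q5 \<Longrightarrow> p6 = q6 \<Longrightarrow>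
  lc6 x1 x2 x3 x4 x5 x6 p1 p2 p3 p4 p5 p6 = lc6 x1 x2 x3 x4 x5 x6 q1 q2 q3 q4 q5 q6"
  by simp

lemma extract_dec:
  assumes axp: "primitive_axis sc mu p" and axq: "primitive_axis sc mu q"
    and fb: "frobenius_form sc mu B" and Bpq: "B p q = 1"
  shows "\<exists>z h. q = p + z + h \<and> mu p z = 0 \<and> mu p h = sc (1/2) h"
proof -
  obtain u1 u0 uh where U: "mu p u1 = u1" "mu p u0 = 0" "mu p uh = sc (1/2) uh" "q = u1 + u0 + uh"
    using axis_D(3)[OF axp] by blast
  have "P1 p q - sc (B p q) p = 0" using axis_to_id[OF axp fb] unfolding axid_def by blast
  then have "P1 p q = p" using Bpq by simp
  then have "u1 = p" using decomp_proj(1)[OF U] by simp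
  then show ?thesis using U by blast
qed

lemma Bsym1:
  assumes fb: "frobenius_form sc mu B" and pp: "mu p p = p" and Bpp: "B p p = 1"
    and q: "q = p + z + h" and pz: "mu p z = 0" and ph: "mu p h = sc (1/2) h"
  shows "B q p = 1"
proof -
  have B1add: "B (x + y) w = B x w + B y w" for x y w using fb unfolding frobenius_form_def by blast
  have B1sc: "B (sc s y) x = s * B y x" for x y s using fb unfolding frobenius_form_def by blast
  have Bas: "B (mu x y) w = B x (mu y w)" for x y w using fb unfolding frobenius_form_def by blast
  have B0: "B 0 x = 0" for x using B1add[of 0 0 x] by simp
  have "B z p = B z (mu p p)" using pp by simp
  also have "\<dots> = B (mu z p) p" using Bas by simp
  also have "\<dots> = 0" using pz B0 by (simp add: mu_comm[of z])
  finally have Bz: "B z p = 0" .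
  have "B h p = B h (mu p p)" using pp by simp
  also have "\<dots> = B (mu h p) p" using Bas by simp
  also have "\<dots> = (1/2) * B h p" using ph B1sc by (simp add: mu_comm[of h])
  finally have Bh: "B h p = 0" by simp
  show ?thesis using q B1add Bz Bh Bpp by simp
qed

lemma Glemma:
  assumes pp: "mu p p = p" and q: "q = p + z + h" and pz: "mu p z = 0" and ph: "mu p h = sc (1/2) h"
  shows "mu p (mu p q) = sc (1/2) (p + mu p q)"
proof -
  have q': "q = lc4 p z h 0 1 1 1 0" using q by (simp add: lc4_def)
  have p': "p = lc4 p z h 0 1 0 0 0" by (simp add: lc4_def)
  have "mu p (mu p q) = lc4 p z h 0 1 0 (1/4) 0" unfolding q' by (simp add: eig_lc[OF pp pz ph])
  moreover have "sc (1/2) (p + mu p q) = lc4 p z h 0 1 0 (1/4) 0"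
    unfolding q' by (subst p') (simp add: eig_lc[OF pp pz ph] lc4_simps)
  ultimately show ?thesis by simp
qed

end

locale ctx = calg sc mu for sc :: "'k::field_char_0 \<Rightarrow> 'v::ab_group_add \<Rightarrow> 'v" and mu +
  fixes B :: "'v \<Rightarrow> 'v \<Rightarrow> 'k" and a b :: 'v
  assumes fb: "frobenius_form sc mu B"
    and axa: "primitive_axis sc mu a" and axb: "primitive_axis sc mu b" and Bab: "B a b = 1"
begin

lemma table: "\<exists>z h. b = a + z + h \<and> mu a z = 0 \<and> mu a h = sc (1/2) h \<and> mu z h = 0 \<and> mu h h = z \<and> mu z z = 0"
proof -
  obtain z h where bd: "b = a + z + h" and az: "mu a z = 0" and ah: "mu a h = sc (1/2) h"
    using extract_dec[OF axa axb fb Bab] by blast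
  have aa: "mu a a = a" using axis_D(2)[OF axa] .
  have bb: "mu b b = b" using axis_D(2)[OF axb] .
  have Baa: "B a a = 1" using fb axa unfolding frobenius_form_def by blast
  have Bba: "B b a = 1" by (rule Bsym1[OF fb aa Baa bd az ah])
  obtain z' h' where ad: "a = b + z' + h'" and bz': "mu b z' = 0" and bh': "mu b h' = sc (1/2) h'"
    using extract_dec[OF axb axa fb Bba] by blast
  have G: "mu b (mu b a) = sc (1/2) (b + mu b a)" by (rule Glemma[OF bb ad bz' bh'])
  obtain w1 w0 where w1: "mu a w1 = w1" and w0: "mu a w0 = 0" and hh: "mu h h = w1 + w0"
    using axis_D(7)[OF axa ah ah] by blast
  obtain lam where lam: "w1 = sc lam a" using axis_D(4)[OF axa w1] by blast
  define zz where "zz = mu z z"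
  define zh where "zh = mu z h"
  have azz: "mu a zz = 0" unfolding zz_def by (rule axis_D(5)[OF axa az az])
  have azh: "mu a zh = sc (1/2) zh" unfolding zh_def by (rule axis_D(6)[OF axa az ah])
  have za: "mu z a = 0" using az by (simp add: mu_comm[of z])
  have ha: "mu h a = sc (1/2) h" using ah by (simp add: mu_comm[of h])
  have hz: "mu h z = zh" unfolding zh_def by (rule mu_comm)
  have hh': "mu h h = sc lam a + w0" using hh lam by simp
  define V where "V = lc6 a h zz zh w0 z"
  have VB: "a = V 1 0 0 0 0 0" "h = V 0 1 0 0 0 0" "zz = V 0 0 1 0 0 0" "zh = V 0 0 0 1 0 0"
     "w0 = V 0 0 0 0 1 0" "z = V 0 0 0 0 0 1" "(0::'v) = V 0 0 0 0 0 0"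
    unfolding V_def by (simp_all add: lc6_def)
  have Vadd: "V p1 p2 p3 p4 p5 p6 + V q1 q2 q3 q4 q5 q6 = V (p1+q1) (p2+q2) (p3+q3) (p4+q4) (p5+q5) (p6+q6)"
    for p1 p2 p3 p4 p5 p6 q1 q2 q3 q4 q5 q6 unfolding V_def by (rule lc6_add)
  have Vdiff: "V p1 p2 p3 p4 p5 p6 - V q1 q2 q3 q4 q5 q6 = V (p1-q1) (p2-q2) (p3-q3) (p4-q4) (p5-q5) (p6-q6)"
    for p1 p2 p3 p4 p5 p6 q1 q2 q3 q4 q5 q6 unfolding V_def by (rule lc6_diff)
  have Vsc: "sc t (V p1 p2 p3 p4 p5 p6) = V (t*p1) (t*p2) (t*p3) (t*p4) (t*p5) (t*p6)"
    for t p1 p2 p3 p4 p5 p6 unfolding V_def by (rule lc6_scale)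
  have "mu b b - b = V lam 0 1 2 1 (-1)"
    unfolding bd
    apply (simp only: mu_add1 mu_add2 aa az ah za ha hz hh' zz_def[symmetric] zh_def[symmetric])
    apply (simp only: VB(1-6))
    apply (simp only: Vadd Vdiff Vsc VB(7))
    apply simp
    done
  then have E: "V lam 0 1 2 1 (-1) = 0" using bb by simp
  define Y where "Y = zz + w0 - z"
  have aY: "mu a Y = 0" unfolding Y_def using azz w0 az by (simp add: mu_simps)
  have "V lam 0 1 2 1 (-1) = lc4 a Y zh 0 lam 1 2 0"
    unfolding V_def Y_def by (simp add: lc6_def lc4_def algebra_simps)
  then have E4: "lc4 a Y zh 0 lam 1 2 0 = 0" using E by simp
  have "P1 a (lc4 a Y zh 0 lam 1 2 0) = lc4 a Y zh 0 lam 0 0 0" by (rule eig_proj(1)[OF aa aY azh])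
  then have "sc lam a = 0" using E4 by (simp add: P1_def lc4_def)
  then have hhw: "mu h h = w0" using hh' by simp
  have "Ph a (lc4 a Y zh 0 lam 1 2 0) = lc4 a Y zh 0 0 0 2 0" by (rule eig_proj(3)[OF aa aY azh])
  then have "sc 2 zh = 0" using E4 by (simp add: Ph_def lc4_def)
  then have zh0: "zh = 0" by simp
  have "P0 a (lc4 a Y zh 0 lam 1 2 0) = lc4 a Y zh 0 0 1 0 0" by (rule eig_proj(2)[OF aa aY azh])
  then have "lc4 a Y zh 0 0 1 0 0 = 0" unfolding E4 by (simp add: P0_def)
  then have "Y = 0" by (simp add: lc4_def)
  then have Y0: "zz + w0 = z" unfolding Y_def by (simp add: algebra_simps)
  have ba: "mu b a = a + sc (1/2) h" unfolding bd by (simp add: mu_simps aa za ha)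
  have "mu b (mu b a) - sc (1/2) (b + mu b a) = V 0 0 0 0 (1/2) (-1/2)"
    unfolding ba unfolding bd
    apply (simp only: mu_add1 mu_add2 mu_scale1 mu_scale2 aa az ah za ha hz hhw zh0 zz_def[symmetric] zh_def[symmetric])
    apply (simp only: VB(1-6))
    apply (simp only: Vadd Vdiff Vsc VB(7))
    apply simp
    done
  then have "V 0 0 0 0 (1/2) (-1/2) = 0" using G by simp
  then have "sc (1/2) (w0 - z) = 0" unfolding V_def by (simp add: lc6_def scale_right_diff_distrib)
  then have wz: "w0 = z" by simp
  show ?thesis
  proof (intro exI conjI)
    show "b = a + z + h" "mu a z = 0" "mu a h = sc (1/2) h" by (fact bd az ah)+
    show "mu z h = 0" using zh0 zh_def by simp
    show "mu h h = z" using hhw wz by simp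
    show "mu z z = 0" using Y0 wz zz_def by simp
  qed
qed

end

locale jctx = ctx sc mu B a b for sc :: "'k::field_char_0 \<Rightarrow> 'v::ab_group_add \<Rightarrow> 'v" and mu B a b +
  fixes z h :: 'v
  assumes bd: "b = a + z + h" and az: "mu a z = 0" and ah: "mu a h = sc (1/2) h"
    and zh: "mu z h = 0" and hh: "mu h h = z" and zz: "mu z z = 0"
begin

definition T :: "'k \<Rightarrow> 'k \<Rightarrow> 'k \<Rightarrow> 'v" where "T p q r = lc4 a h z 0 p q r 0"

lemma T_add: "T p q r + T p' q' r' = T (p+p') (q+q') (r+r')"
  unfolding T_def by (simp add: lc4_add)
lemma T_diff: "T p q r - T p' q' r' = T (p-p') (q-q') (r-r')"
  unfolding T_def by (simp add: lc4_diff)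
lemma T_sc: "sc t (T p q r) = T (t*p) (t*q) (t*r)"
  unfolding T_def by (simp add: lc4_scale)
lemma T_basis: "a = T 1 0 0" "h = T 0 1 0" "z = T 0 0 1" "(0::'v) = T 0 0 0"
  unfolding T_def by (simp_all add: lc4_def)
lemma T_b: "b = T 1 1 1"
  unfolding T_def bd by (simp add: lc4_def algebra_simps)

lemma aa: "mu a a = a" using axis_D(2)[OF axa] .

lemma T_mu_a: "mu (T p q r) a = T p (q/2) 0"
  unfolding T_def using aa ah az by (simp add: lc4_def mu_simps mu_comm[of h a] mu_comm[of z a])
lemma T_mu_h: "mu (T p q r) h = T 0 (p/2) q"
  unfolding T_def using ah hh zh by (simp add: lc4_def mu_simps)
lemma T_mu_z: "mu (T p q r) z = 0"
  unfolding T_def using az zh zz by (simp add: lc4_def mu_simps mu_comm[of h z])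

lemma T_mu: "mu (T p q r) (T p' q' r') = T (p*p') ((p*q' + q*p')/2) (q*q')"
proof -
  have "mu (T p q r) (T p' q' r') = sc p' (mu (T p q r) a) + sc q' (mu (T p q r) h) + sc r' (mu (T p q r) z)"
    by (subst (2) T_def) (simp add: lc4_def mu_simps)
  also have "\<dots> = T (p*p') ((p*q' + q*p')/2) (q*q')"
    unfolding T_mu_a T_mu_h T_mu_z
    by (simp add: T_sc T_add) (simp add: T_def lc4_def algebra_simps add_divide_distrib)
  finally show ?thesis .
qed

lemma gen_T: "x \<in> gen_subalg sc mu {a, b} \<Longrightarrow> \<exists>p q r. x = T p q r"
proof (induction rule: gen_subalg.induct)
  case (gen_base x)
  then show ?case using T_basis(1) T_b by blast
next
  case gen_zero
  then show ?case using T_basis(4) by blast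
next
  case (gen_add x y)
  then show ?case using T_add by metis
next
  case (gen_scale x t)
  then show ?case using T_sc by metis
next
  case (gen_mult x y)
  then show ?case using T_mu by metis
qed

lemma a_ne: "a \<noteq> 0" using axis_D(1)[OF axa] .

lemma idem_T: assumes c: "c = T p q r" and cc: "mu c c = c" and c0: "c \<noteq> 0"
  shows "c = T 1 q (q^2)"
proof -
  have m: "mu c c = T (p*p) (p*q) (q*q)" unfolding c T_mu by (simp add: algebra_simps)
  have E: "T (p*p - p) (p*q - q) (q*q - r) = 0" using m cc c T_diff[of "p*p" "p*q" "q*q" p q r] by simp
  have E1: "mu a (T (p*p - p) (p*q - q) (q*q - r)) = T (p*p - p) ((p*q - q)/2) 0"
    by (subst (1) T_basis(1)) (simp add: T_mu)
  have E2: "mu a (mu a (T (p*p - p) (p*q - q) (q*q - r))) = T (p*p - p) ((p*q - q)/4) 0"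
    unfolding E1 by (subst (1) T_basis(1)) (simp add: T_mu)
  have "sc 2 (mu a (mu a (T (p*p - p) (p*q - q) (q*q - r)))) - mu a (T (p*p - p) (p*q - q) (q*q - r)) = T (p*p - p) 0 0"
    unfolding E2 unfolding E1 by (simp add: T_sc T_diff) (simp add: field_simps)
  then have "T (p*p - p) 0 0 = 0" unfolding E by simp
  then have "sc (p*p - p) a = 0" unfolding T_def by (simp add: lc4_def)
  then have "p*p - p = 0" using a_ne by simp
  then have "p = 0 \<or> p = 1" by (metis diff_0_right eq_iff_diff_eq_0 mult_cancel_left2 mult_zero_right) 
  then show ?thesis
  proof
    assume p1: "p = 1"
    show ?thesis using cc m p1 by (simp add: power2_eq_square)
  next
    assume p0: "p = 0"
    have "T 0 (- q/2) 0 = 0" using E1 E p0 by simp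
    then have "sc (- q/2) h = 0" unfolding T_def by (simp add: lc4_def)
    then have qh: "q = 0 \<or> h = 0" by simp
    have cq: "c = T 0 0 (q*q)" using cc m p0 by simp
    have "c = 0"
    proof (cases "q = 0")
      case True then show ?thesis using cq T_basis(4) by simp
    next
      case False then have "h = 0" using qh by simp
      then have "z = 0" using hh by simp
      then show ?thesis using cq unfolding T_def by (simp add: lc4_def)
    qed
    then show ?thesis using c0 by simp
  qed
qed

lemma T_cong: "p = p' \<Longrightarrow> q = q' \<Longrightarrow> r = r' \<Longrightarrow> T p q r = T p' q' r'" by simp

lemma tau_a_T: "tau a (T p q r) = T p (-q) r"
proof -
  have e: "T p q r = sc p a + sc r z + sc q h" unfolding T_def by (simp add: lc4_def algebra_simps)
  have "tau a (sc p a + sc r z + sc q h) = sc p a + sc r z - sc q h"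
    by (rule tau_dec) (simp_all add: mu_scale2 aa az ah scale_left_commute)
  then show ?thesis unfolding e unfolding T_def by (simp add: lc4_def algebra_simps)
qed

lemma tau_b_T: "tau b (T p q r) = T p (2*p - q) (r - 4*q + 4*p)"
  by (simp add: tau_def Ph_def T_b T_mu T_sc T_diff) (rule T_cong; simp add: field_simps)

definition cx :: "'k \<Rightarrow> 'v" where "cx x = T 1 x (x^2)"

lemma axes_nat: "primitive_axis sc mu (cx (of_nat n))"
proof -
  have "primitive_axis sc mu (cx (of_nat n)) \<and> primitive_axis sc mu (cx (of_nat (Suc n)))"
  proof (induction n)
    case 0
    have "cx 0 = a" unfolding cx_def using T_basis(1) by simp
    moreover have "cx 1 = b" unfolding cx_def using T_b by simp
    ultimately show ?case using axa axb by simp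
  next
    case (Suc n)
    define x :: 'k where "x = of_nat n"
    have "tau b (tau a (cx x)) = cx (x + 2)" unfolding cx_def tau_a_T tau_b_T
      by (rule T_cong) (simp_all add: power2_eq_square algebra_simps)
    moreover have "primitive_axis sc mu (tau b (tau a (cx x)))"
      using Suc.IH tau_axis[OF axa] tau_axis[OF axb] unfolding x_def by blast
    ultimately have ax2: "primitive_axis sc mu (cx (x + 2))" by simp
    have e2: "(of_nat (Suc (Suc n)) :: 'k) = x + 2" unfolding x_def by simp
    have "primitive_axis sc mu (cx (of_nat (Suc (Suc n))))" unfolding e2 by (rule ax2)
    then show ?case using Suc.IH by blast
  qed
  then show ?thesis by blast
qed

lemma cx_poly: "polyv cx"
proof -
  have "cx = (\<lambda>x. a + sc x h + sc x (sc x z))"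
    unfolding cx_def T_def by (auto simp: lc4_def power2_eq_square)
  moreover have "polyv (\<lambda>x. a + sc x h + sc x (sc x z))"
    by (intro polyv_add polyv_x polyv_const)
  ultimately show ?thesis by simp
qed

lemma B_cx: "sc (B (cx x) u) (cx x) = sc (B a u) (cx x) + sc x (sc (B h u) (cx x)) + sc x (sc x (sc (B z u) (cx x)))"
proof -
  have B1add: "B (x + y) w = B x w + B y w" for x y w using fb unfolding frobenius_form_def by blast
  have B1sc: "B (sc s y) x = s * B y x" for x y s using fb unfolding frobenius_form_def by blast
  have B0: "B 0 x = 0" for x using B1add[of 0 0 x] by simp
  have "B (cx x) u = B a u + x * B h u + x^2 * B z u"
    unfolding cx_def T_def lc4_def using B1add B1sc B0 by simp
  then show ?thesis by (simp add: scale_left_distrib power2_eq_square mult.assoc)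
qed

lemma transfer: assumes "polyv (\<lambda>x. F (cx x))" and "\<And>c. axid B c \<Longrightarrow> F c = 0"
  shows "F (cx y) = 0"
proof -
  have "\<And>n::nat. F (cx (of_nat n)) = 0" using assms(2) axis_to_id[OF axes_nat fb] by blast
  then show ?thesis using polyv_zero[OF assms(1)] by blast
qed

lemma axid_cx: "axid B (cx y)"
  unfolding axid_def
proof (intro allI conjI)
  fix u v
  show "sc 2 (mu (cx y) (mu (cx y) (mu (cx y) u))) - sc 3 (mu (cx y) (mu (cx y) u)) + mu (cx y) u = 0"
    by (rule transfer[where F="\<lambda>c. sc 2 (mu c (mu c (mu c u))) - sc 3 (mu c (mu c u)) + mu c u"])
       (intro polyv_add polyv_diff polyv_scale polyv_mu polyv_const cx_poly, simp add: axid_def)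
  show "P1 (cx y) u - sc (B (cx y) u) (cx y) = 0"
  proof (rule transfer[where F="\<lambda>c. P1 c u - sc (B c u) c"])
    show "polyv (\<lambda>x. P1 (cx x) u - sc (B (cx x) u) (cx x))"
      unfolding B_cx P1_def by (intro polyv_add polyv_diff polyv_scale polyv_mu polyv_const polyv_x cx_poly)
  qed (simp add: axid_def)
  show "mu (cx y) (mu (P0 (cx y) u) (P0 (cx y) v)) = 0"
    by (rule transfer[where F="\<lambda>c. mu c (mu (P0 c u) (P0 c v))"])
       (unfold P0_def, intro polyv_add polyv_diff polyv_scale polyv_mu polyv_const cx_poly, simp add: axid_def P0_def)
  show "mu (cx y) (mu (P0 (cx y) u) (Ph (cx y) v)) - sc (1/2) (mu (P0 (cx y) u) (Ph (cx y) v)) = 0"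
    by (rule transfer[where F="\<lambda>c. mu c (mu (P0 c u) (Ph c v)) - sc (1/2) (mu (P0 c u) (Ph c v))"])
       (unfold P0_def Ph_def, intro polyv_add polyv_diff polyv_scale polyv_mu polyv_const cx_poly, simp add: axid_def P0_def Ph_def)
  show "Ph (cx y) (mu (Ph (cx y) u) (Ph (cx y) v)) = 0"
    by (rule transfer[where F="\<lambda>c. Ph c (mu (Ph c u) (Ph c v))"])
       (unfold Ph_def, intro polyv_add polyv_diff polyv_scale polyv_mu polyv_const cx_poly, simp add: axid_def Ph_def)
qed

lemma solid: "\<forall>c \<in> gen_subalg sc mu {a, b}. c \<noteq> 0 \<and> mu c c = c \<longrightarrow> primitive_axis sc mu c"
proof (intro ballI impI, elim conjE)
  fix c assume cg: "c \<in> gen_subalg sc mu {a, b}" and c0: "c \<noteq> 0" and cc: "mu c c = c"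
  obtain p q r where "c = T p q r" using gen_T[OF cg] by blast
  then have "c = cx q" using idem_T cc c0 unfolding cx_def by blast
  then have "axid B c" using axid_cx by simp
  then show "primitive_axis sc mu c" by (rule id_to_axis[OF c0 cc])
qed

end

theorem proposition6p5:
  fixes sc :: "'k::field_char_0 \<Rightarrow> 'v::ab_group_add \<Rightarrow> 'v"
    and mu :: "'v \<Rightarrow> 'v \<Rightarrow> 'v"
    and B :: "'v \<Rightarrow> 'v \<Rightarrow> 'k"
    and a b :: 'v
  assumes "jordan_half_algebra sc mu"
    and "frobenius_form sc mu B"
    and "primitive_axis sc mu a"
    and "primitive_axis sc mu b"
    and "B a b = 1"
  shows "\<forall>c \<in> gen_subalg sc mu {a, b}. c \<noteq> 0 \<and> mu c c = c \<longrightarrow> primitive_axis sc mu c"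
proof -
  have ca: "comm_algebra sc mu" using assms(1) unfolding jordan_half_algebra_def by blast
  have C: "ctx sc mu B a b"
    using ca assms(2-5) unfolding comm_algebra_def ctx_def calg_def calg_axioms_def ctx_axioms_def by blast
  interpret C: ctx sc mu B a b by (rule C)
  obtain z h where t: "b = a + z + h" "mu a z = 0" "mu a h = sc (1/2) h" "mu z h = 0" "mu h h = z" "mu z z = 0"
    using C.table by blast
  have J: "jctx sc mu B a b z h"
    using C t unfolding jctx_def jctx_axioms_def by blast
  interpret J: jctx sc mu B a b z h by (rule J)
  show ?thesis by (rule J.solid)
qed

end
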